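(* $(I(\mathbb N),\tau_{pp})$ is a Polish topological inverse semigroup, and $d=\rho+\rho^\ast$ is a complete metric compatible with $\tau_{pp}$.
   Context: $I(\mathbb N)$ is the set of all bijections $f:A\to B$ with $A,B\subseteq\mathbb N$ (including the empty map), $\mathrm{dom}(f)=A$, $\mathrm{im}(f)=B$, under composition ($\mathrm{dom}(f\circ g)=g^{-1}(\mathrm{dom}(f)\cap\mathrm{im}(g))$) and inversion $f\mapsto f^{-1}$. For $x,y$: $v(x,y)=\{f: x\in\mathrm{dom}(f), f(x)=y\}$, $w_1(x)=\{f: x\notin\mathrm{dom}(f)\}$, $w_2(y)=\{f: y\notin\mathrm{im}(f)\}$; $\tau_{pp}$ is the topology generated by all these sets. For $f,g\in I(\mathbb N)$ and $n\in\mathbb N$ let $a_{(f,g)}(n)=0$ if $n\in\mathrm{dom}(f)\cap\mathrm{dom}(g)$ or $n\notin\mathrm{dom}(f)\cup\mathrm{dom}(g)$, and $1$ otherwise; $b_{(f,g)}(n)=\min\{1,|f(n)-g(n)|\}$ if $n\in\mathrm{dom}(f)\cap\mathrm{dom}(g)$ and $0$ otherwise. $\rho(f,g)=\sum_{n\in\mathbb N}\frac{a_{(f,g)}(n)+b_{(f,g)}(n)}{2^n}$, $\rho^\ast(f,g)=\rho(f^{-1},g^{-1})$. A topological inverse semigroup has continuous multiplication and inversion. *)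

theory Defs
  imports "HOL-Analysis.Analysis"
begin

text \<open>Partial bijections of nat, represented as partial maps f :: nat \<rightharpoonup> nat
  that are injective on their domain.  dom(f) = dom f, im(f) = ran f.\<close>

definition IN :: "(nat \<rightharpoonup> nat) set" where
  "IN = {f. inj_on f (dom f)}"

text \<open>Composition f \<circ> g (first g, then f): the library's map composition \<open>f \<circ>\<^sub>m g\<close>,
  whose domain is g^{-1}(dom f \<inter> im g).\<close>

definition pcomp :: "(nat \<rightharpoonup> nat) \<Rightarrow> (nat \<rightharpoonup> nat) \<Rightarrow> (nat \<rightharpoonup> nat)" where
  "pcomp f g = f \<circ>\<^sub>m g"

definition pinv :: "(nat \<rightharpoonup> nat) \<Rightarrow> (nat \<rightharpoonup> nat)" where
  "pinv f = (\<lambda>y. if y \<in> ran f then Some (THE x. f x = Some y) else None)"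

definition v_set :: "nat \<Rightarrow> nat \<Rightarrow> (nat \<rightharpoonup> nat) set" where
  "v_set x y = {f \<in> IN. f x = Some y}"

definition w1_set :: "nat \<Rightarrow> (nat \<rightharpoonup> nat) set" where
  "w1_set x = {f \<in> IN. x \<notin> dom f}"

definition w2_set :: "nat \<Rightarrow> (nat \<rightharpoonup> nat) set" where
  "w2_set y = {f \<in> IN. y \<notin> ran f}"

definition tau_pp :: "(nat \<rightharpoonup> nat) topology" where
  "tau_pp = subtopology
     (topology_generated_by
        ((\<lambda>(x,y). v_set x y) ` UNIV \<union> range w1_set \<union> range w2_set)) IN"

definition a_fun :: "(nat \<rightharpoonup> nat) \<Rightarrow> (nat \<rightharpoonup> nat) \<Rightarrow> nat \<Rightarrow> real" where
  "a_fun f g n = (if (n \<in> dom f \<inter> dom g) \<or> (n \<notin> dom f \<union> dom g) then 0 else 1)"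

definition b_fun :: "(nat \<rightharpoonup> nat) \<Rightarrow> (nat \<rightharpoonup> nat) \<Rightarrow> nat \<Rightarrow> real" where
  "b_fun f g n = (if n \<in> dom f \<inter> dom g
      then min 1 \<bar>real (the (f n)) - real (the (g n))\<bar> else 0)"

definition rho :: "(nat \<rightharpoonup> nat) \<Rightarrow> (nat \<rightharpoonup> nat) \<Rightarrow> real" where
  "rho f g = (\<Sum>n. (a_fun f g n + b_fun f g n) / 2 ^ n)"

definition rho_star :: "(nat \<rightharpoonup> nat) \<Rightarrow> (nat \<rightharpoonup> nat) \<Rightarrow> real" where
  "rho_star f g = rho (pinv f) (pinv g)"

definition dpp :: "(nat \<rightharpoonup> nat) \<Rightarrow> (nat \<rightharpoonup> nat) \<Rightarrow> real" where
  "dpp f g = rho f g + rho_star f g"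

definition Polish_top :: "'a topology \<Rightarrow> bool" where
  "Polish_top X \<longleftrightarrow> separable_space X \<and> completely_metrizable_space X"

definition topological_inverse_semigroup ::
  "'a topology \<Rightarrow> ('a \<Rightarrow> 'a \<Rightarrow> 'a) \<Rightarrow> ('a \<Rightarrow> 'a) \<Rightarrow> bool" where
  "topological_inverse_semigroup X mul iv \<longleftrightarrow>
     (\<forall>x\<in>topspace X. \<forall>y\<in>topspace X. \<forall>z\<in>topspace X.
        mul (mul x y) z = mul x (mul y z)) \<and>
     (\<forall>x\<in>topspace X. mul (mul x (iv x)) x = x \<and> mul (mul (iv x) x) (iv x) = iv x) \<and>
     (\<forall>x\<in>topspace X. \<forall>y\<in>topspace X.
        mul (mul x (iv x)) (mul y (iv y)) = mul (mul y (iv y)) (mul x (iv x))) \<and>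
     continuous_map (prod_topology X X) X (\<lambda>(x,y). mul x y) \<and>
     continuous_map X X iv"

end

theory Submission imports Defs begin

lemma IN_iff: "f \<in> IN \<longleftrightarrow> (\<forall>x x' y. f x = Some y \<and> f x' = Some y \<longrightarrow> x = x')"
  unfolding IN_def inj_on_def dom_def by auto

lemma map_eq_SomeI: "(\<And>x y. p x = Some y \<longleftrightarrow> q x = Some y) \<Longrightarrow> p = q"
  by (rule ext) (metis not_None_eq)

lemma pinv_Some: assumes "f \<in> IN" shows "pinv f y = Some x \<longleftrightarrow> f x = Some y"
proof
  assume h: "pinv f y = Some x"
  then have r: "y \<in> ran f" by (auto simp: pinv_def split: if_splits)
  then obtain z where z: "f z = Some y" by (auto simp: ran_def)
  have u: "\<And>w. f w = Some y \<Longrightarrow> w = z" using assms z by (auto simp: IN_iff)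
  have "(THE x. f x = Some y) = z" using z u by blast
  then show "f x = Some y" using h r z by (auto simp: pinv_def)
next
  assume h: "f x = Some y"
  then have r: "y \<in> ran f" by (auto simp: ran_def)
  have u: "\<And>w. f w = Some y \<Longrightarrow> w = x" using assms h by (auto simp: IN_iff)
  have "(THE x. f x = Some y) = x" using h u by blast
  then show "pinv f y = Some x" using r by (simp add: pinv_def)
qed

lemma pinv_None: "pinv f y = None \<longleftrightarrow> y \<notin> ran f"
  by (simp add: pinv_def)

lemma pinv_IN: "f \<in> IN \<Longrightarrow> pinv f \<in> IN"
  by (auto simp: IN_iff pinv_Some)

lemma pinv_pinv: "f \<in> IN \<Longrightarrow> pinv (pinv f) = f"
  by (rule map_eq_SomeI) (simp add: pinv_Some pinv_IN)

lemma pcomp_Some: "pcomp f g x = Some y \<longleftrightarrow> (\<exists>z. g x = Some z \<and> f z = Some y)"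
  by (simp add: pcomp_def map_comp_Some_iff)

lemma pcomp_IN: "f \<in> IN \<Longrightarrow> g \<in> IN \<Longrightarrow> pcomp f g \<in> IN"
  unfolding IN_iff pcomp_Some by metis

lemma pinv_pcomp: "f \<in> IN \<Longrightarrow> g \<in> IN \<Longrightarrow> pinv (pcomp f g) = pcomp (pinv g) (pinv f)"
  by (rule map_eq_SomeI) (auto simp: pinv_Some pcomp_Some pcomp_IN pinv_IN)

lemma pcomp_assoc: "pcomp (pcomp f g) h = pcomp f (pcomp g h)"
  by (rule map_eq_SomeI) (auto simp: pcomp_Some)

lemma pcomp_pinv_id: "f \<in> IN \<Longrightarrow> pcomp f (pinv f) = (\<lambda>y. if y \<in> ran f then Some y else None)"
  by (rule map_eq_SomeI) (auto simp: pinv_Some pcomp_Some ran_def)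

lemma pcomp_pinv_f: "f \<in> IN \<Longrightarrow> pcomp (pcomp f (pinv f)) f = f"
  by (rule map_eq_SomeI) (auto simp: pinv_Some pcomp_Some)


definition dl :: "(nat \<rightharpoonup> nat) \<Rightarrow> (nat \<rightharpoonup> nat) \<Rightarrow> nat \<Rightarrow> real" where
  "dl p q n = (if p n = q n then 0 else 1)"

lemma ab_dl: "a_fun f g n + b_fun f g n = dl f g n"
proof (cases "f n")
  case None then show ?thesis by (cases "g n") (auto simp: a_fun_def b_fun_def dl_def)
next
  case (Some a) then show ?thesis
  proof (cases "g n")
    case (Some b)
    have "a \<noteq> b \<Longrightarrow> 1 \<le> \<bar>real a - real b\<bar>" by linarith
    then show ?thesis using \<open>f n = Some a\<close> Some by (auto simp: a_fun_def b_fun_def dl_def min_def)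
  qed (auto simp: a_fun_def b_fun_def dl_def)
qed

lemma rho_dl: "rho f g = (\<Sum>n. dl f g n / 2 ^ n)"
  by (simp add: rho_def ab_dl)

lemma dl_summable: "summable (\<lambda>n. dl f g n / 2 ^ n)"
proof (rule summable_comparison_test)
  show "\<exists>N. \<forall>n\<ge>N. norm (dl f g n / 2 ^ n) \<le> (1/2) ^ n"
    by (auto simp: dl_def power_one_over)
qed (simp add: summable_geometric)

lemma dl_nonneg: "0 \<le> dl f g n" by (simp add: dl_def)

lemma rho_nonneg: "0 \<le> rho f g"
  unfolding rho_dl by (rule suminf_nonneg[OF dl_summable]) (simp add: dl_nonneg)

lemma rho_commute: "rho f g = rho g f"
  unfolding rho_dl dl_def by (simp add: eq_commute)

lemma rho_zero_iff: "rho f g = 0 \<longleftrightarrow> f = g"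
proof
  assume "rho f g = 0"
  then have "\<forall>n. dl f g n / 2 ^ n = 0"
    unfolding rho_dl using suminf_eq_zero_iff[OF dl_summable] dl_nonneg by simp
  then show "f = g" by (intro ext) (auto simp: dl_def split: if_splits)
qed (simp add: rho_dl dl_def)

lemma rho_triangle: "rho f h \<le> rho f g + rho g h"
proof -
  have "rho f h \<le> (\<Sum>n. dl f g n / 2 ^ n + dl g h n / 2 ^ n)"
    unfolding rho_dl
  proof (rule suminf_le)
    show "summable (\<lambda>n. dl f g n / 2 ^ n + dl g h n / 2 ^ n)"
      by (intro summable_add dl_summable)
  qed (use dl_summable[of f h] in \<open>auto simp: dl_def divide_simps\<close>)
  also have "\<dots> = rho f g + rho g h"
    unfolding rho_dl by (rule suminf_add[symmetric]) (auto simp: dl_summable)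
  finally show ?thesis .
qed

lemma rho_lower: "f n \<noteq> g n \<Longrightarrow> 1 / 2 ^ n \<le> rho f g"
  unfolding rho_dl
  using sum_le_suminf[OF dl_summable, of "{n}" f g] dl_nonneg
  by (auto simp: dl_def)

lemma rho_lower': "rho f g < 1 / 2 ^ N \<Longrightarrow> n \<le> N \<Longrightarrow> f n = g n"
proof (rule ccontr)
  assume "rho f g < 1 / 2 ^ N" "n \<le> N" "f n \<noteq> g n"
  then have "1 / 2 ^ n \<le> rho f g" using rho_lower by blast
  moreover have "(1::real) / 2 ^ N \<le> 1 / 2 ^ n"
    using \<open>n \<le> N\<close> by (simp add: divide_simps power_increasing)
  ultimately show False using \<open>rho f g < 1 / 2 ^ N\<close> by simp
qed

lemma rho_upper:
  assumes "\<forall>n\<le>N. f n = g n" shows "rho f g \<le> 1 / 2 ^ N"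
proof -
  define u where "u n = (if n < Suc N then 0 else (1/2::real) ^ n)" for n
  have "(\<lambda>i. u (i + Suc N)) = (\<lambda>i. (1/2) ^ Suc N * (1/2) ^ i)"
    by (auto simp: u_def power_add)
  moreover have "(\<lambda>i. (1/2::real) ^ Suc N * (1/2) ^ i) sums ((1/2) ^ Suc N * 2)"
    using sums_mult[OF geometric_sums[of "1/2::real"], of "(1/2) ^ Suc N"] by (simp only: norm_divide) (simp add: field_simps)
  ultimately have "(\<lambda>i. u (i + Suc N)) sums ((1/2) ^ Suc N * 2)" by simp
  then have s: "u sums ((1/2) ^ Suc N * 2)"
    by (subst (asm) sums_zero_iff_shift) (auto simp: u_def)
  have "rho f g \<le> suminf u"
    unfolding rho_dl
    by (rule suminf_le) (use assms s dl_summable[of f g] in \<open>auto simp: u_def dl_def sums_summable power_one_over\<close>)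
  also have "\<dots> = 1 / 2 ^ N" using s sums_unique by (fastforce simp: power_one_over)
  finally show ?thesis .
qed


definition nb :: "nat \<Rightarrow> (nat \<rightharpoonup> nat) \<Rightarrow> (nat \<rightharpoonup> nat) set" where
  "nb N f = {g \<in> IN. \<forall>n\<le>N. g n = f n \<and> pinv g n = pinv f n}"

definition ochar :: "(nat \<rightharpoonup> nat) set \<Rightarrow> bool" where
  "ochar U \<longleftrightarrow> U \<subseteq> IN \<and> (\<forall>f\<in>U. \<exists>N. nb N f \<subseteq> U)"

lemma nb_mono: "N \<le> M \<Longrightarrow> nb M f \<subseteq> nb N f"
  by (auto simp: nb_def)

lemma nb_IN: "nb N f \<subseteq> IN" by (auto simp: nb_def)

lemma self_nb: "f \<in> IN \<Longrightarrow> f \<in> nb N f" by (auto simp: nb_def)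

lemma dpp_metric: "Metric_space IN dpp"
proof
  fix x y z :: "nat \<rightharpoonup> nat"
  show "0 \<le> dpp x y" by (simp add: dpp_def rho_star_def rho_nonneg add_nonneg_nonneg)
  show "dpp x y = dpp y x" by (simp add: dpp_def rho_star_def rho_commute)
  show "x \<in> IN \<Longrightarrow> y \<in> IN \<Longrightarrow> dpp x y = 0 \<longleftrightarrow> x = y"
    using rho_nonneg[of x y] rho_nonneg[of "pinv x" "pinv y"] rho_zero_iff[of x y]
      rho_zero_iff[of "pinv x" "pinv x"] rho_zero_iff[of "x" "x"]
    unfolding dpp_def rho_star_def by (cases "x = y") auto
  show "dpp x z \<le> dpp x y + dpp y z"
    using rho_triangle[of x z y] rho_triangle[of "pinv x" "pinv z" "pinv y"]
    by (simp add: dpp_def rho_star_def)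
qed

lemma dpp_small: "dpp f g < 1 / 2 ^ N \<Longrightarrow> n \<le> N \<Longrightarrow> f n = g n \<and> pinv f n = pinv g n"
  using rho_lower'[of f g N n] rho_lower'[of "pinv f" "pinv g" N n]
    rho_nonneg[of f g] rho_nonneg[of "pinv f" "pinv g"]
  by (auto simp: dpp_def rho_star_def)

lemma dpp_nb: "g \<in> nb N f \<Longrightarrow> dpp f g \<le> 2 / 2 ^ N"
  using rho_upper[of N f g] rho_upper[of N "pinv f" "pinv g"]
  by (auto simp: dpp_def rho_star_def nb_def)

lemma small_pow: "(r::real) > 0 \<Longrightarrow> \<exists>N. 2 / 2 ^ N < r"
proof -
  assume r: "r > 0"
  obtain N where "2 / r < (2::real) ^ N" using real_arch_pow[of 2 "2/r"] by auto
  then have "2 < r * 2 ^ N" using r by (simp add: field_simps)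
  then show ?thesis using r by (intro exI[of _ N]) (simp add: field_simps)
qed

lemma openin_dpp: "openin (Metric_space.mtopology IN dpp) U \<longleftrightarrow> ochar U"
proof -
  interpret Metric_space IN dpp by (rule dpp_metric)
  show ?thesis unfolding openin_mtopology ochar_def
  proof (intro iffI conjI ballI; (elim conjE)?)
    assume U: "U \<subseteq> IN" "\<forall>x. x \<in> U \<longrightarrow> (\<exists>r>0. mball x r \<subseteq> U)"
    fix f assume "f \<in> U"
    then obtain r where r: "r > 0" "mball f r \<subseteq> U" using U by auto
    obtain N where N: "2 / 2 ^ N < r" using small_pow[OF r(1)] by auto
    have "nb N f \<subseteq> mball f r"
    proof
      fix g assume g: "g \<in> nb N f"
      then show "g \<in> mball f r" using dpp_nb[OF g] N \<open>f \<in> U\<close> U(1) nb_IN by auto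
    qed
    then show "\<exists>N. nb N f \<subseteq> U" using r by blast
  next
    assume U: "U \<subseteq> IN" "\<forall>f\<in>U. \<exists>N. nb N f \<subseteq> U"
    show "U \<subseteq> IN" by fact
    show "\<forall>x. x \<in> U \<longrightarrow> (\<exists>r>0. mball x r \<subseteq> U)"
    proof (intro allI impI)
      fix f assume "f \<in> U"
      then obtain N where N: "nb N f \<subseteq> U" using U by auto
      have "mball f (1 / 2 ^ N) \<subseteq> nb N f"
        using dpp_small[of f _ N] by (auto simp: nb_def)
      then show "\<exists>r>0. mball f r \<subseteq> U" using N by (intro exI[of _ "1 / 2 ^ N"]) auto
    qed
  qed auto
qed


abbreviation SB :: "(nat \<rightharpoonup> nat) set set" where
  "SB \<equiv> (\<lambda>(x,y). v_set x y) ` UNIV \<union> range w1_set \<union> range w2_set"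

lemma gen_nb: "generate_topology_on SB T \<Longrightarrow> \<forall>f\<in>T \<inter> IN. \<exists>N. nb N f \<subseteq> T"
proof (induction rule: generate_topology_on.induct)
  case (Int a b)
  show ?case
  proof
    fix f assume "f \<in> a \<inter> b \<inter> IN"
    then obtain N1 N2 where "nb N1 f \<subseteq> a" "nb N2 f \<subseteq> b" using Int.IH by blast
    then have "nb (max N1 N2) f \<subseteq> a \<inter> b"
      using nb_mono[of N1 "max N1 N2" f] nb_mono[of N2 "max N1 N2" f] by auto
    then show "\<exists>N. nb N f \<subseteq> a \<inter> b" by blast
  qed
next
  case (UN K)
  then show ?case by blast
next
  case (Basis s)
  show ?case
  proof
    fix f assume f: "f \<in> s \<inter> IN"
    from Basis consider x y where "s = v_set x y" | x where "s = w1_set x" | y where "s = w2_set y"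
      by auto
    then show "\<exists>N. nb N f \<subseteq> s"
    proof cases
      case (1 x y)
      then have "nb x f \<subseteq> s" using f by (auto simp: nb_def v_set_def)
      then show ?thesis by blast
    next
      case (2 x)
      then have "nb x f \<subseteq> s" using f by (auto simp: nb_def w1_set_def)
      then show ?thesis by blast
    next
      case (3 y)
      then have "nb y f \<subseteq> s" using f by (auto simp: nb_def w2_set_def simp flip: pinv_None)
      then show ?thesis by blast
    qed
  qed
qed simp

lemma nb_eq: "f \<in> IN \<Longrightarrow> nb N f = (\<Inter>n\<in>{..N}.
   (case f n of None \<Rightarrow> w1_set n | Some y \<Rightarrow> v_set n y) \<inter>
   (case pinv f n of None \<Rightarrow> w2_set n | Some x \<Rightarrow> v_set x n)) \<inter> IN"
proof -
  assume f: "f \<in> IN"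
  have C: "g \<in> (case f n of None \<Rightarrow> w1_set n | Some y \<Rightarrow> v_set n y) \<longleftrightarrow> g \<in> IN \<and> g n = f n" for g n
    by (cases "f n") (auto simp: w1_set_def v_set_def)
  have D: "g \<in> (case pinv f n of None \<Rightarrow> w2_set n | Some x \<Rightarrow> v_set x n) \<longleftrightarrow> g \<in> IN \<and> pinv g n = pinv f n" for g n
    by (cases "pinv f n") (auto simp: w2_set_def v_set_def pinv_Some simp flip: pinv_None)
  show ?thesis unfolding nb_def using C D by auto
qed

lemma openin_tau: "openin tau_pp U \<longleftrightarrow> ochar U"
proof
  assume "openin tau_pp U"
  then obtain T where T: "generate_topology_on SB T" "U = T \<inter> IN"
    unfolding tau_pp_def openin_subtopology openin_topology_generated_by_iff by blast
  show "ochar U" unfolding ochar_def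
    using gen_nb[OF T(1)] nb_IN T(2) by blast
next
  assume U: "ochar U"
  have nbo: "openin tau_pp (nb N f)" if f: "f \<in> IN" for N f
  proof -
    have "openin (topology_generated_by SB) (\<Inter>n\<in>{..N}.
     (case f n of None \<Rightarrow> w1_set n | Some y \<Rightarrow> v_set n y) \<inter>
     (case pinv f n of None \<Rightarrow> w2_set n | Some x \<Rightarrow> v_set x n))"
    proof (intro openin_INT2 openin_Int)
      fix n
      show "openin (topology_generated_by SB) (case f n of None \<Rightarrow> w1_set n | Some y \<Rightarrow> v_set n y)"
        by (cases "f n") (auto intro!: topology_generated_by_Basis)
      show "openin (topology_generated_by SB) (case pinv f n of None \<Rightarrow> w2_set n | Some x \<Rightarrow> v_set x n)"
        by (cases "pinv f n") (auto intro!: topology_generated_by_Basis)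
    qed auto
    then show ?thesis unfolding tau_pp_def nb_eq[OF f] openin_subtopology by blast
  qed
  obtain N where N: "\<forall>f\<in>U. nb (N f) f \<subseteq> U" using U unfolding ochar_def by metis
  have "U = \<Union>((\<lambda>f. nb (N f) f) ` U)"
    using N self_nb U unfolding ochar_def by blast
  moreover have "openin tau_pp (\<Union>((\<lambda>f. nb (N f) f) ` U))"
    using U nbo unfolding ochar_def by blast
  ultimately show "openin tau_pp U" by simp
qed

lemma topspace_tau: "topspace tau_pp = IN"
proof -
  have "openin tau_pp IN" unfolding openin_tau ochar_def using nb_IN by blast
  then have "IN \<subseteq> topspace tau_pp" by (rule openin_subset)
  moreover have "topspace tau_pp \<subseteq> IN" unfolding tau_pp_def by simp
  ultimately show ?thesis by blast
qed

lemma mtop_eq: "Metric_space.mtopology IN dpp = tau_pp"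
  by (rule topology_eq[THEN iffD2]) (simp add: openin_tau openin_dpp)


lemma nb_open: "ochar (nb M f)"
  unfolding ochar_def nb_def by (intro conjI ballI exI[of _ M]) auto

lemma bnd_le: "x \<le> N \<Longrightarrow> (p :: nat \<rightharpoonup> nat) x = Some z \<Longrightarrow> z \<le> (\<Sum>x\<le>N. case p x of None \<Rightarrow> 0 | Some z \<Rightarrow> z)"
  using member_le_sum[of x "{..N}" "\<lambda>x. case p x of None \<Rightarrow> 0 | Some z \<Rightarrow> (z::nat)"] by auto

lemma pcomp_app: "pcomp f g x = (case g x of None \<Rightarrow> None | Some z \<Rightarrow> f z)"
  by (simp add: pcomp_def map_comp_def)

lemma pcomp_nb:
  fixes N :: nat
  assumes f: "f \<in> IN" and g: "g \<in> IN"
  defines "M \<equiv> N + (\<Sum>x\<le>N. case g x of None \<Rightarrow> 0 | Some z \<Rightarrow> z)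
                  + (\<Sum>x\<le>N. case pinv f x of None \<Rightarrow> 0 | Some z \<Rightarrow> z)"
  assumes f': "f' \<in> nb M f" and g': "g' \<in> nb M g"
  shows "pcomp f' g' \<in> nb N (pcomp f g)"
proof -
  have f'IN: "f' \<in> IN" and g'IN: "g' \<in> IN" using f' g' by (auto simp: nb_def)
  have fa: "\<And>n. n \<le> M \<Longrightarrow> f' n = f n \<and> pinv f' n = pinv f n" using f' by (auto simp: nb_def)
  have ga: "\<And>n. n \<le> M \<Longrightarrow> g' n = g n \<and> pinv g' n = pinv g n" using g' by (auto simp: nb_def)
  have 1: "pcomp f' g' x = pcomp f g x" if x: "x \<le> N" for x
  proof -
    have "g' x = g x" using ga[of x] x by (simp add: M_def)
    moreover have "g x = Some z \<Longrightarrow> f' z = f z" for z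
      using bnd_le[OF x, of g z] fa[of z] by (simp add: M_def)
    ultimately show ?thesis by (cases "g x") (auto simp: pcomp_app)
  qed
  have 2: "pinv (pcomp f' g') y = pinv (pcomp f g) y" if y: "y \<le> N" for y
  proof -
    have "pinv f' y = pinv f y" using fa[of y] y by (simp add: M_def)
    moreover have "pinv f y = Some z \<Longrightarrow> pinv g' z = pinv g z" for z
      using bnd_le[OF y, of "pinv f" z] ga[of z] by (simp add: M_def)
    ultimately show ?thesis
      by (cases "pinv f y") (auto simp: pcomp_app pinv_pcomp f g f'IN g'IN)
  qed
  show ?thesis using 1 2 pcomp_IN[OF f'IN g'IN] by (auto simp: nb_def)
qed

lemma cont_pinv: "continuous_map tau_pp tau_pp pinv"
  unfolding continuous_map topspace_tau
proof (intro conjI allI impI)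
  show "pinv ` IN \<subseteq> IN" using pinv_IN by auto
  fix U assume "openin tau_pp U"
  then have U: "ochar U" by (simp add: openin_tau)
  show "openin tau_pp {x \<in> IN. pinv x \<in> U}" unfolding openin_tau ochar_def
  proof (intro conjI ballI)
    fix f assume f: "f \<in> {x \<in> IN. pinv x \<in> U}"
    then obtain N where N: "nb N (pinv f) \<subseteq> U" using U unfolding ochar_def by blast
    have "nb N f \<subseteq> {x \<in> IN. pinv x \<in> U}"
    proof
      fix g assume g: "g \<in> nb N f"
      then have "pinv g \<in> nb N (pinv f)" using f
        by (auto simp: nb_def pinv_IN pinv_pinv)
      then show "g \<in> {x \<in> IN. pinv x \<in> U}" using N g nb_IN by blast
    qed
    then show "\<exists>N. nb N f \<subseteq> {x \<in> IN. pinv x \<in> U}" by blast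
  qed auto
qed

lemma cont_pcomp: "continuous_map (prod_topology tau_pp tau_pp) tau_pp (\<lambda>(x,y). pcomp x y)"
  unfolding continuous_map topspace_prod_topology topspace_tau
proof (intro conjI allI impI)
  show "(\<lambda>(x,y). pcomp x y) ` (IN \<times> IN) \<subseteq> IN" using pcomp_IN by auto
  fix U assume "openin tau_pp U"
  then have U: "ochar U" by (simp add: openin_tau)
  show "openin (prod_topology tau_pp tau_pp) {x \<in> IN \<times> IN. (case x of (x, y) \<Rightarrow> pcomp x y) \<in> U}"
    unfolding openin_prod_topology_alt
  proof (intro allI impI)
    fix f g assume fg: "(f, g) \<in> {x \<in> IN \<times> IN. (case x of (x, y) \<Rightarrow> pcomp x y) \<in> U}"
    then have f: "f \<in> IN" and g: "g \<in> IN" and u: "pcomp f g \<in> U" by auto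
    obtain N where N: "nb N (pcomp f g) \<subseteq> U" using U u unfolding ochar_def by blast
    define M where "M \<equiv> N + (\<Sum>x\<le>N. case g x of None \<Rightarrow> 0 | Some z \<Rightarrow> z)
                  + (\<Sum>x\<le>N. case pinv f x of None \<Rightarrow> 0 | Some z \<Rightarrow> z)"
    have "nb M f \<times> nb M g \<subseteq> {x \<in> IN \<times> IN. (case x of (x, y) \<Rightarrow> pcomp x y) \<in> U}"
    proof
      fix p assume "p \<in> nb M f \<times> nb M g"
      then obtain f' g' where p: "p = (f', g')" and a: "f' \<in> nb M f" "g' \<in> nb M g" by blast
      have "pcomp f' g' \<in> nb N (pcomp f g)" using pcomp_nb[OF f g, where N=N] a unfolding M_def by blast
      then show "p \<in> {x \<in> IN \<times> IN. (case x of (x, y) \<Rightarrow> pcomp x y) \<in> U}" using N a nb_IN[of M f] nb_IN[of M g] p by auto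
    qed
    moreover have "openin tau_pp (nb M f)" "openin tau_pp (nb M g)"
      by (simp_all add: openin_tau nb_open)
    moreover have "f \<in> nb M f" "g \<in> nb M g" using f g by (simp_all add: self_nb)
    ultimately show "\<exists>U' V. openin tau_pp U' \<and> openin tau_pp V \<and> f \<in> U' \<and> g \<in> V \<and>
       U' \<times> V \<subseteq> {x \<in> IN \<times> IN. (case x of (x, y) \<Rightarrow> pcomp x y) \<in> U}" by blast
  qed
qed

lemma tis: "topological_inverse_semigroup tau_pp pcomp pinv"
  unfolding topological_inverse_semigroup_def topspace_tau
proof (intro conjI ballI cont_pinv cont_pcomp)
  fix x y z assume x: "x \<in> IN" and y: "y \<in> IN"
  show "pcomp (pcomp x y) z = pcomp x (pcomp y z)" by (rule pcomp_assoc)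
  show "pcomp (pcomp x (pinv x)) x = x" using x by (rule pcomp_pinv_f)
  show "pcomp (pcomp (pinv x) x) (pinv x) = pinv x"
    using pcomp_pinv_f[OF pinv_IN[OF x]] pinv_pinv[OF x] by simp
  show "pcomp (pcomp x (pinv x)) (pcomp y (pinv y)) = pcomp (pcomp y (pinv y)) (pcomp x (pinv x))"
    unfolding pcomp_pinv_id[OF x] pcomp_pinv_id[OF y]
    by (rule ext) (simp add: pcomp_app)
qed


lemma opt_eqI: "(\<And>x. a = Some x \<longleftrightarrow> b = Some x) \<Longrightarrow> a = b"
  by (metis not_None_eq)

lemma dpp_complete: "Metric_space.mcomplete IN dpp"
proof -
  interpret Metric_space IN dpp by (rule dpp_metric)
  show ?thesis unfolding mcomplete_def
  proof (intro allI impI)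
    fix \<sigma> assume C: "MCauchy \<sigma>"
    then have sIN: "\<And>n. \<sigma> n \<in> IN" unfolding MCauchy_def by auto
    have stab: "\<exists>N. \<forall>n\<ge>N. \<sigma> n k = \<sigma> N k \<and> pinv (\<sigma> n) k = pinv (\<sigma> N) k" for k
    proof -
      obtain N where N: "\<forall>n n'. N \<le> n \<longrightarrow> N \<le> n' \<longrightarrow> dpp (\<sigma> n) (\<sigma> n') < 1 / 2 ^ k"
        using C unfolding MCauchy_def by (meson divide_pos_pos zero_less_numeral zero_less_one zero_less_power)
      show ?thesis using dpp_small N by (intro exI[of _ N]) (metis order_refl)
    qed
    define Nk where "Nk k = (SOME N. \<forall>n\<ge>N. \<sigma> n k = \<sigma> N k \<and> pinv (\<sigma> n) k = pinv (\<sigma> N) k)" for k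
    define f where "f k = \<sigma> (Nk k) k" for k
    define h where "h k = pinv (\<sigma> (Nk k)) k" for k
    have ev: "\<And>n k. Nk k \<le> n \<Longrightarrow> \<sigma> n k = f k \<and> pinv (\<sigma> n) k = h k"
    proof -
      fix n k assume "Nk k \<le> n"
      moreover have "\<forall>n\<ge>Nk k. \<sigma> n k = \<sigma> (Nk k) k \<and> pinv (\<sigma> n) k = pinv (\<sigma> (Nk k)) k"
        unfolding Nk_def by (rule someI_ex[OF stab])
      ultimately show "\<sigma> n k = f k \<and> pinv (\<sigma> n) k = h k" unfolding f_def h_def by blast
    qed
    have fIN: "f \<in> IN" unfolding IN_iff
    proof (intro allI impI)
      fix a b y assume "f a = Some y \<and> f b = Some y"
      then have "\<sigma> (max (Nk a) (Nk b)) a = Some y" "\<sigma> (max (Nk a) (Nk b)) b = Some y"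
        using ev[of a "max (Nk a) (Nk b)"] ev[of b "max (Nk a) (Nk b)"] by auto
      then show "a = b" using sIN[of "max (Nk a) (Nk b)"] unfolding IN_iff by blast
    qed
    have ph: "pinv f = h"
    proof (rule map_eq_SomeI)
      fix y x
      let ?n = "max (Nk x) (Nk y)"
      have e1: "\<sigma> ?n x = f x" "pinv (\<sigma> ?n) y = h y" using ev[of x ?n] ev[of y ?n] by auto
      show "pinv f y = Some x \<longleftrightarrow> h y = Some x"
        using e1 pinv_Some[OF fIN] pinv_Some[OF sIN[of ?n]] by metis
    qed
    have "limitin mtopology \<sigma> f sequentially"
      unfolding limitin_metric
    proof (intro conjI allI impI fIN)
      fix \<epsilon> :: real assume "\<epsilon> > 0"
      then obtain N where N: "2 / 2 ^ N < \<epsilon>" using small_pow by blast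
      define K where "K = (\<Sum>k\<le>N. Nk k)"
      have "\<sigma> n \<in> IN \<and> dpp (\<sigma> n) f < \<epsilon>" if n: "K \<le> n" for n
      proof -
        have "Nk k \<le> n" if "k \<le> N" for k
          using member_le_sum[of k "{..N}" Nk] that n by (auto simp: K_def)
        then have "\<sigma> n \<in> nb N f" using ev sIN ph by (auto simp: nb_def)
        then have "dpp f (\<sigma> n) \<le> 2 / 2 ^ N" by (rule dpp_nb)
        then show ?thesis using N sIN commute by (metis le_less_trans)
      qed
      then show "\<forall>\<^sub>F n in sequentially. \<sigma> n \<in> IN \<and> dpp (\<sigma> n) f < \<epsilon>"
        unfolding eventually_sequentially by blast
    qed
    then show "\<exists>x. limitin mtopology \<sigma> x sequentially" by blast
  qed
qed

lemma finite_map_of: "finite (dom m) \<Longrightarrow> \<exists>l. m = map_of l"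
proof (induction m rule: finite_Map_induct)
  case empty
  then show ?case by (intro exI[of _ "[]"]) simp
next
  case (update k v m)
  then obtain l where "m = map_of l" by blast
  then show ?case by (intro exI[of _ "(k,v) # l"]) simp
qed

lemma separable: "separable_space tau_pp"
  unfolding separable_space_def
proof (intro exI[of _ "{g \<in> IN. finite (dom g)}"] conjI)
  have "{g \<in> IN. finite (dom g)} \<subseteq> range (map_of :: (nat \<times> nat) list \<Rightarrow> _)"
    using finite_map_of by blast
  then show "countable {g \<in> IN. finite (dom g)}"
    by (rule countable_subset) simp
  show "{g \<in> IN. finite (dom g)} \<subseteq> topspace tau_pp" by (auto simp: topspace_tau)
  show "tau_pp closure_of {g \<in> IN. finite (dom g)} = topspace tau_pp"
  proof (rule antisym)
    show "tau_pp closure_of {g \<in> IN. finite (dom g)} \<subseteq> topspace tau_pp"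
      by (rule closure_of_subset_topspace)
    show "topspace tau_pp \<subseteq> tau_pp closure_of {g \<in> IN. finite (dom g)}"
    proof
      fix f assume "f \<in> topspace tau_pp"
      then have f: "f \<in> IN" by (simp add: topspace_tau)
      show "f \<in> tau_pp closure_of {g \<in> IN. finite (dom g)}"
        unfolding in_closure_of
      proof (intro conjI allI impI)
        show "f \<in> topspace tau_pp" using f by (simp add: topspace_tau)
        fix T assume T: "f \<in> T \<and> openin tau_pp T"
        then obtain N where N: "nb N f \<subseteq> T" unfolding openin_tau ochar_def by blast
        define A where "A = {..N} \<union> {x. \<exists>y\<le>N. f x = Some y}"
        define g where "g = f |` A"
        have "{x. \<exists>y\<le>N. f x = Some y} \<subseteq> (\<lambda>y. the (pinv f y)) ` {..N}"
          using pinv_Some[OF f] by force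
        then have Afin: "finite A" unfolding A_def by (meson finite_Un finite_atMost finite_imageI finite_subset)
        have gIN: "g \<in> IN" using f unfolding IN_iff g_def restrict_map_def by auto
        have "dom g \<subseteq> A" by (auto simp: g_def restrict_map_def split: if_splits)
        then have gfin: "finite (dom g)" using Afin finite_subset by blast
        have "g \<in> nb N f" unfolding nb_def
        proof (intro CollectI conjI allI impI gIN)
          fix n assume n: "n \<le> N"
          show "g n = f n" using n by (simp add: g_def A_def)
          show "pinv g n = pinv f n"
          proof (rule opt_eqI)
            fix x
            have "g x = Some n \<longleftrightarrow> f x = Some n"
              using n by (auto simp: g_def A_def restrict_map_def)
            then show "pinv g n = Some x \<longleftrightarrow> pinv f n = Some x"
              by (simp add: pinv_Some gIN f)
          qed
        qed
        then show "\<exists>y. y \<in> {g \<in> IN. finite (dom g)} \<and> y \<in> T" using N gIN gfin by blast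
      qed
    qed
  qed
qed

theorem theorem4p4:
  shows "Polish_top tau_pp \<and> topological_inverse_semigroup tau_pp pcomp pinv \<and>
         Metric_space IN dpp \<and> Metric_space.mcomplete IN dpp \<and>
         Metric_space.mtopology IN dpp = tau_pp"
proof -
  have "completely_metrizable_space tau_pp"
    using Metric_space.completely_metrizable_space_mtopology[OF dpp_metric dpp_complete]
    by (simp add: mtop_eq)
  then show ?thesis
    using separable tis dpp_metric dpp_complete mtop_eq by (simp add: Polish_top_def)
qed

end
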